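(* In the CCV $\lambda\mu$-calculus, the reduction relation consisting only of vertical reductions $\mu k.[k]M\to M$ (with $k$ not free in $M$) is strongly normalizing and confluent.
   Context: CCV $\lambda\mu$-calculus. Ordinary variables $x,y,\dots$ and continuation variables $k,l,\dots$ are disjoint. Terms $M ::= x \mid \lambda x.M \mid MM \mid (M\ \mathsf{where}\ x:=M) \mid \mu k.J$, jumps $J ::= [k]M \mid (J\ \mathsf{where}\ x:=M)$, where $(L\ \mathsf{where}\ x:=M)$ means $\mathsf{let}\ x=M\ \mathsf{in}\ L$ ($x$ bound in $L$ only); terms are identified up to $\alpha$-conversion and the congruence generated by (E1) $(L\ \mathsf{where}\ x:=(M\ \mathsf{where}\ y:=N))=((L\ \mathsf{where}\ x:=M)\ \mathsf{where}\ y:=N)$ if $y$ not free in $L$; (E2) $((\mu k.J)\ \mathsf{where}\ x:=M)=\mu k.(J\ \mathsf{where}\ x:=M)$ if $k$ not free in $M$; (E3) $[k](L\ \mathsf{where}\ x:=M)=([k]L\ \mathsf{where}\ x:=M)$. A vertical reduction is the contraction of a subterm $\mu k.[k]M$ with $k$ not free in $M$ to $M$, anywhere inside a term or jump. *)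

theory Defs
  imports Main
begin

text \<open>Ordinary variables and continuation variables are both represented by
natural numbers, but they occur in syntactically disjoint positions
(ordinary: Var, Lam, where-binders; continuation: Mu binder and jump target),
so the two name spaces are disjoint.\<close>

type_synonym var = nat
type_synonym cvar = nat

datatype trm =
    Var var
  | Lam var trm
  | App trm trm
  | TWhere trm var trm   (* (L where x := M): x bound in L only *)
  | Mu cvar jmp
and jmp =
    Jmp cvar trm          (* [k]M *)
  | JWhere jmp var trm   (* (J where x := M): x bound in J only *)

primrec fv_t :: "trm \<Rightarrow> var set" and fv_j :: "jmp \<Rightarrow> var set" where
  "fv_t (Var x) = {x}"
| "fv_t (Lam x M) = fv_t M - {x}"
| "fv_t (App M N) = fv_t M \<union> fv_t N"
| "fv_t (TWhere L x M) = (fv_t L - {x}) \<union> fv_t M"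
| "fv_t (Mu k J) = fv_j J"
| "fv_j (Jmp k M) = fv_t M"
| "fv_j (JWhere J x M) = (fv_j J - {x}) \<union> fv_t M"

primrec fcv_t :: "trm \<Rightarrow> cvar set" and fcv_j :: "jmp \<Rightarrow> cvar set" where
  "fcv_t (Var x) = {}"
| "fcv_t (Lam x M) = fcv_t M"
| "fcv_t (App M N) = fcv_t M \<union> fcv_t N"
| "fcv_t (TWhere L x M) = fcv_t L \<union> fcv_t M"
| "fcv_t (Mu k J) = fcv_j J - {k}"
| "fcv_j (Jmp k M) = insert k (fcv_t M)"
| "fcv_j (JWhere J x M) = fcv_j J \<union> fcv_t M"

definition sw :: "nat \<Rightarrow> nat \<Rightarrow> nat \<Rightarrow> nat" where
  "sw a b c = (if c = a then b else if c = b then a else c)"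

primrec swp_t :: "var \<Rightarrow> var \<Rightarrow> trm \<Rightarrow> trm" and swp_j :: "var \<Rightarrow> var \<Rightarrow> jmp \<Rightarrow> jmp" where
  "swp_t a b (Var x) = Var (sw a b x)"
| "swp_t a b (Lam x M) = Lam (sw a b x) (swp_t a b M)"
| "swp_t a b (App M N) = App (swp_t a b M) (swp_t a b N)"
| "swp_t a b (TWhere L x M) = TWhere (swp_t a b L) (sw a b x) (swp_t a b M)"
| "swp_t a b (Mu k J) = Mu k (swp_j a b J)"
| "swp_j a b (Jmp k M) = Jmp k (swp_t a b M)"
| "swp_j a b (JWhere J x M) = JWhere (swp_j a b J) (sw a b x) (swp_t a b M)"

primrec cswp_t :: "cvar \<Rightarrow> cvar \<Rightarrow> trm \<Rightarrow> trm" and cswp_j :: "cvar \<Rightarrow> cvar \<Rightarrow> jmp \<Rightarrow> jmp" where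
  "cswp_t a b (Var x) = Var x"
| "cswp_t a b (Lam x M) = Lam x (cswp_t a b M)"
| "cswp_t a b (App M N) = App (cswp_t a b M) (cswp_t a b N)"
| "cswp_t a b (TWhere L x M) = TWhere (cswp_t a b L) x (cswp_t a b M)"
| "cswp_t a b (Mu k J) = Mu (sw a b k) (cswp_j a b J)"
| "cswp_j a b (Jmp k M) = Jmp (sw a b k) (cswp_t a b M)"
| "cswp_j a b (JWhere J x M) = JWhere (cswp_j a b J) x (cswp_t a b M)"

inductive eq_t :: "trm \<Rightarrow> trm \<Rightarrow> bool" and eq_j :: "jmp \<Rightarrow> jmp \<Rightarrow> bool" where
  t_refl: "eq_t M M"
| t_sym: "eq_t M N \<Longrightarrow> eq_t N M"
| t_trans: "eq_t M N \<Longrightarrow> eq_t N P \<Longrightarrow> eq_t M P"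
| j_refl: "eq_j J J"
| j_sym: "eq_j J K \<Longrightarrow> eq_j K J"
| j_trans: "eq_j J K \<Longrightarrow> eq_j K L \<Longrightarrow> eq_j J L"
| c_lam: "eq_t M M' \<Longrightarrow> eq_t (Lam x M) (Lam x M')"
| c_app: "eq_t M M' \<Longrightarrow> eq_t N N' \<Longrightarrow> eq_t (App M N) (App M' N')"
| c_twhere: "eq_t L L' \<Longrightarrow> eq_t M M' \<Longrightarrow> eq_t (TWhere L x M) (TWhere L' x M')"
| c_mu: "eq_j J J' \<Longrightarrow> eq_t (Mu k J) (Mu k J')"
| c_jmp: "eq_t M M' \<Longrightarrow> eq_j (Jmp k M) (Jmp k M')"
| c_jwhere: "eq_j J J' \<Longrightarrow> eq_t M M' \<Longrightarrow> eq_j (JWhere J x M) (JWhere J' x M')"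
| a_lam: "y \<notin> fv_t M - {x} \<Longrightarrow> eq_t (Lam x M) (Lam y (swp_t x y M))"
| a_twhere: "y \<notin> fv_t L - {x} \<Longrightarrow> eq_t (TWhere L x M) (TWhere (swp_t x y L) y M)"
| a_jwhere: "y \<notin> fv_j J - {x} \<Longrightarrow> eq_j (JWhere J x M) (JWhere (swp_j x y J) y M)"
| a_mu: "l \<notin> fcv_j J - {k} \<Longrightarrow> eq_t (Mu k J) (Mu l (cswp_j k l J))"
| e1_t: "y \<notin> fv_t L \<Longrightarrow>
     eq_t (TWhere L x (TWhere M y N)) (TWhere (TWhere L x M) y N)"
| e1_j: "y \<notin> fv_j L \<Longrightarrow>
     eq_j (JWhere L x (TWhere M y N)) (JWhere (JWhere L x M) y N)"
| e2: "k \<notin> fcv_t M \<Longrightarrow> eq_t (TWhere (Mu k J) x M) (Mu k (JWhere J x M))"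
| e3: "eq_j (Jmp k (TWhere L x M)) (JWhere (Jmp k L) x M)"

inductive vstep_t :: "trm \<Rightarrow> trm \<Rightarrow> bool" and vstep_j :: "jmp \<Rightarrow> jmp \<Rightarrow> bool" where
  v_root: "k \<notin> fcv_t M \<Longrightarrow> vstep_t (Mu k (Jmp k M)) M"
| v_lam: "vstep_t M M' \<Longrightarrow> vstep_t (Lam x M) (Lam x M')"
| v_app1: "vstep_t M M' \<Longrightarrow> vstep_t (App M N) (App M' N)"
| v_app2: "vstep_t N N' \<Longrightarrow> vstep_t (App M N) (App M N')"
| v_twhere1: "vstep_t L L' \<Longrightarrow> vstep_t (TWhere L x M) (TWhere L' x M)"
| v_twhere2: "vstep_t M M' \<Longrightarrow> vstep_t (TWhere L x M) (TWhere L x M')"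
| v_mu: "vstep_j J J' \<Longrightarrow> vstep_t (Mu k J) (Mu k J')"
| v_jmp: "vstep_t M M' \<Longrightarrow> vstep_j (Jmp k M) (Jmp k M')"
| v_jwhere1: "vstep_j J J' \<Longrightarrow> vstep_j (JWhere J x M) (JWhere J' x M)"
| v_jwhere2: "vstep_t M M' \<Longrightarrow> vstep_j (JWhere J x M) (JWhere J x M')"

definition vred_t :: "trm \<Rightarrow> trm \<Rightarrow> bool" where
  "vred_t M N \<longleftrightarrow> (\<exists>M' N'. eq_t M M' \<and> vstep_t M' N' \<and> eq_t N' N)"

definition vred_j :: "jmp \<Rightarrow> jmp \<Rightarrow> bool" where
  "vred_j J K \<longleftrightarrow> (\<exists>J' K'. eq_j J J' \<and> vstep_j J' K' \<and> eq_j K' K)"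

text \<open>Many-step reduction on equivalence classes: zero steps means staying in
the same class.\<close>

definition vreds_t :: "trm \<Rightarrow> trm \<Rightarrow> bool" where
  "vreds_t = (\<lambda>M N. eq_t M N \<or> vred_t M N)\<^sup>*\<^sup>*"

definition vreds_j :: "jmp \<Rightarrow> jmp \<Rightarrow> bool" where
  "vreds_j = (\<lambda>J K. eq_j J K \<or> vred_j J K)\<^sup>*\<^sup>*"

definition SN :: "('a \<Rightarrow> 'a \<Rightarrow> bool) \<Rightarrow> bool" where
  "SN R \<longleftrightarrow> wfp (\<lambda>y x. R x y)"

definition confluent :: "('a \<Rightarrow> 'a \<Rightarrow> bool) \<Rightarrow> bool" where
  "confluent Rs \<longleftrightarrow> (\<forall>M N1 N2. Rs M N1 \<and> Rs M N2 \<longrightarrow> (\<exists>P. Rs N1 P \<and> Rs N2 P))"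

end

theory Submission
  imports Defs
begin

primrec jhead :: "jmp \<Rightarrow> cvar" where
  "jhead (Jmp k M) = k"
| "jhead (JWhere J x M) = jhead J"

primrec jterm :: "jmp \<Rightarrow> trm" where
  "jterm (Jmp k M) = M"
| "jterm (JWhere J x M) = TWhere (jterm J) x M"

definition fmu :: "cvar \<Rightarrow> jmp \<Rightarrow> trm" where
  "fmu k A = (if jhead A = k \<and> k \<notin> fcv_t (jterm A) then jterm A else Mu k A)"

primrec nf_t :: "trm \<Rightarrow> trm" and nf_j :: "jmp \<Rightarrow> jmp" where
  "nf_t (Var x) = Var x"
| "nf_t (Lam x M) = Lam x (nf_t M)"
| "nf_t (App M N) = App (nf_t M) (nf_t N)"
| "nf_t (TWhere L x M) = TWhere (nf_t L) x (nf_t M)"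
| "nf_t (Mu k J) = fmu k (nf_j J)"
| "nf_j (Jmp k M) = Jmp k (nf_t M)"
| "nf_j (JWhere J x M) = JWhere (nf_j J) x (nf_t M)"

primrec cnt_t :: "trm \<Rightarrow> nat" and cnt_j :: "jmp \<Rightarrow> nat" where
  "cnt_t (Var x) = 0"
| "cnt_t (Lam x M) = cnt_t M"
| "cnt_t (App M N) = cnt_t M + cnt_t N"
| "cnt_t (TWhere L x M) = cnt_t L + cnt_t M"
| "cnt_t (Mu k J) = Suc (cnt_j J)"
| "cnt_j (Jmp k M) = cnt_t M"
| "cnt_j (JWhere J x M) = cnt_j J + cnt_t M"

lemma sw_inj[simp]: "sw a b x = sw a b y \<longleftrightarrow> x = y"
  by (auto simp: sw_def split: if_splits)

lemma sw_sym: "sw a b = sw b a"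
  by (auto simp: sw_def fun_eq_iff)

lemma cswp_sym: "cswp_t a b M = cswp_t b a M" "cswp_j a b J = cswp_j b a J"
  by (induct M and J) (auto simp: sw_sym)

lemma cnt_swp[simp]: "cnt_t (swp_t a b M) = cnt_t M" "cnt_j (swp_j a b J) = cnt_j J"
  by (induct M and J) auto

lemma cnt_cswp[simp]: "cnt_t (cswp_t a b M) = cnt_t M" "cnt_j (cswp_j a b J) = cnt_j J"
  by (induct M and J) auto

lemma fcv_swp[simp]: "fcv_t (swp_t a b M) = fcv_t M" "fcv_j (swp_j a b J) = fcv_j J"
  by (induct M and J) auto

lemma fcv_cswp: "fcv_t (cswp_t a b M) = sw a b ` fcv_t M" "fcv_j (cswp_j a b J) = sw a b ` fcv_j J"
proof (induct M and J)
  case (Mu k J)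
  then show ?case by (auto simp: image_set_diff[OF inj_onI] )
qed (auto simp: image_Un)

lemma cnt_eq: "eq_t M N \<Longrightarrow> cnt_t M = cnt_t N" "eq_j J K \<Longrightarrow> cnt_j J = cnt_j K"
  by (induct rule: eq_t_eq_j.inducts) auto

lemma fcv_eq: "eq_t M N \<Longrightarrow> fcv_t M = fcv_t N" "eq_j J K \<Longrightarrow> fcv_j J = fcv_j K"
proof (induct rule: eq_t_eq_j.inducts)
  case (a_mu l J k)
  then show ?case by (auto simp: fcv_cswp sw_def split: if_splits)
qed auto

lemma cnt_vstep: "vstep_t M N \<Longrightarrow> cnt_t N < cnt_t M" "vstep_j J K \<Longrightarrow> cnt_j K < cnt_j J"
  by (induct rule: vstep_t_vstep_j.inducts) auto



lemma jterm_swp[simp]: "jhead (swp_j a b A) = jhead A" "jterm (swp_j a b A) = swp_t a b (jterm A)"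
  by (induct A) auto

lemma jterm_cswp[simp]: "jhead (cswp_j a b A) = sw a b (jhead A)" "jterm (cswp_j a b A) = cswp_t a b (jterm A)"
  by (induct A) auto

lemma fv_jterm[simp]: "fv_t (jterm A) = fv_j A"
  by (induct A) auto

lemma fcv_jterm_aux: "fcv_t M = fcv_t M" "fcv_t (jterm A) \<subseteq> fcv_j A"
  by (induct M and A) auto

lemma fcv_jterm: "fcv_t (jterm A) \<subseteq> fcv_j A"
  by (rule fcv_jterm_aux(2))

lemma cswp_same[simp]: "cswp_t a a M = M" "cswp_j a a J = J"
  by (induct M and J) (auto simp: sw_def)

lemma nf_swp: "nf_t (swp_t a b M) = swp_t a b (nf_t M)" "nf_j (swp_j a b J) = swp_j a b (nf_j J)"
  by (induct M and J) (auto simp: fmu_def)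

lemma nf_cswp: "nf_t (cswp_t a b M) = cswp_t a b (nf_t M)" "nf_j (cswp_j a b J) = cswp_j a b (nf_j J)"
  by (induct M and J) (auto simp: fmu_def fcv_cswp)

lemma fv_nf: "fv_t (nf_t M) \<subseteq> fv_t M" "fv_j (nf_j J) \<subseteq> fv_j J"
  by (induct M and J) (auto simp: fmu_def)

lemma fcv_nf: "fcv_t (nf_t M) \<subseteq> fcv_t M" "fcv_j (nf_j J) \<subseteq> fcv_j J"
proof (induct M and J)
  case (Mu k J)
  then show ?case using fcv_jterm[of "nf_j J"] by (auto simp: fmu_def)
qed auto

lemma eq_jterm_aux: "eq_t M N \<Longrightarrow> True" "eq_j A B \<Longrightarrow> jhead A = jhead B \<and> eq_t (jterm A) (jterm B)"
proof (induct rule: eq_t_eq_j.inducts)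
  case (a_jwhere y J x M)
  then show ?case by (auto intro: a_twhere)
next
  case (e1_j y L x M N)
  then show ?case by (auto intro: e1_t)
qed (auto intro: eq_t_eq_j.intros)

lemma eq_jterm: "eq_j A B \<Longrightarrow> jhead A = jhead B \<and> eq_t (jterm A) (jterm B)"
  using eq_jterm_aux(2) by blast
lemma eq_cswp_fresh: "k \<notin> fcv_t M \<Longrightarrow> l \<notin> fcv_t M \<Longrightarrow> eq_t M (cswp_t k l M)"
  "k \<notin> fcv_j J \<Longrightarrow> l \<notin> fcv_j J \<Longrightarrow> eq_j J (cswp_j k l J)"
proof (induct M and J)
  case (Mu m J)
  show ?case
  proof (cases "m = k \<or> m = l")
    case True
    then show ?thesis
    proof
      assume "m = k" then show ?thesis using Mu.prems by (auto intro: a_mu simp: sw_def)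
    next
      assume ml: "m = l"
      have "eq_t (Mu l J) (Mu k (cswp_j l k J))" using Mu.prems ml by (auto intro: a_mu)
      then show ?thesis using ml by (auto simp: sw_def cswp_sym intro: t_refl)
    qed
  next
    case False
    then show ?thesis using Mu by (auto intro: c_mu simp: sw_def)
  qed
next
  case (Jmp m M)
  then show ?case by (auto intro: c_jmp simp: sw_def)
qed (auto intro: eq_t_eq_j.intros)

lemma jmp_flat_aux: "fcv_t M = fcv_t M" "eq_j A (Jmp (jhead A) (jterm A))"
proof (induct M and A)
  case (JWhere J x M)
  have "eq_j (JWhere J x M) (JWhere (Jmp (jhead J) (jterm J)) x M)"
    using JWhere by (auto intro: c_jwhere t_refl)
  moreover have "eq_j (JWhere (Jmp (jhead J) (jterm J)) x M) (Jmp (jhead J) (TWhere (jterm J) x M))"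
    by (rule j_sym, rule e3)
  ultimately show ?case by (auto intro: j_trans)
qed (auto intro: eq_t_eq_j.intros)

lemma fmu_cong: "eq_j A B \<Longrightarrow> eq_t (fmu k A) (fmu k B)"
proof -
  assume e: "eq_j A B"
  from eq_jterm[OF e] have h: "jhead A = jhead B" and t: "eq_t (jterm A) (jterm B)" by auto
  from fcv_eq(1)[OF t] have "fcv_t (jterm A) = fcv_t (jterm B)" .
  then show ?thesis using h t e by (auto simp: fmu_def intro: c_mu)
qed

lemma nf_eq: "eq_t M N \<Longrightarrow> eq_t (nf_t M) (nf_t N)" "eq_j J K \<Longrightarrow> eq_j (nf_j J) (nf_j K)"
proof (induct rule: eq_t_eq_j.inducts)
  case (c_mu J J' k)
  then show ?case by (simp add: fmu_cong)
next
  case (a_lam y M x)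
  then show ?case using fv_nf(1)[of M] by (auto simp: nf_swp intro!: eq_t_eq_j.a_lam)
next
  case (a_twhere y L x M)
  then show ?case using fv_nf(1)[of L] by (auto simp: nf_swp intro!: eq_t_eq_j.a_twhere)
next
  case (a_jwhere y J x M)
  then show ?case using fv_nf(2)[of J] by (auto simp: nf_swp intro!: eq_t_eq_j.a_jwhere)
next
  case (a_mu l J k)
  let ?A = "nf_j J"
  have l: "l \<notin> fcv_j ?A - {k}" using a_mu fcv_nf(2)[of J] by auto
  show ?case
  proof (cases "jhead ?A = k \<and> k \<notin> fcv_t (jterm ?A)")
    case True
    have lA: "l \<notin> fcv_t (jterm ?A)" using l True fcv_jterm[of ?A] by auto
    have "sw k l (jhead ?A) = l" using True by (simp add: sw_def)
    moreover have "l \<notin> sw k l ` fcv_t (jterm ?A)"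
      using True lA by (auto simp: sw_def split: if_splits)
    ultimately show ?thesis using True lA
      by (auto simp: fmu_def nf_cswp fcv_cswp intro: eq_cswp_fresh)
  next
    case False
    have "\<not> (sw k l (jhead ?A) = l \<and> l \<notin> sw k l ` fcv_t (jterm ?A))"
    proof
      assume a: "sw k l (jhead ?A) = l \<and> l \<notin> sw k l ` fcv_t (jterm ?A)"
      then have "jhead ?A = k" by (auto simp: sw_def split: if_splits)
      moreover have "sw k l k = l" by (simp add: sw_def)
      ultimately show False using False a by (metis image_eqI)
    qed
    then show ?thesis using False l
      by (auto simp: fmu_def nf_cswp fcv_cswp intro: eq_t_eq_j.a_mu)
  qed
next
  case (e1_t y L x M N)
  then show ?case using fv_nf(1)[of L] by (auto intro: eq_t_eq_j.e1_t)
next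
  case (e1_j y L x M N)
  then show ?case using fv_nf(2)[of L] by (auto intro: eq_t_eq_j.e1_j)
next
  case (e2 k M J x)
  let ?A = "nf_j J"
  have kM: "k \<notin> fcv_t (nf_t M)" using e2 fcv_nf(1)[of M] by auto
  show ?case
  proof (cases "jhead ?A = k \<and> k \<notin> fcv_t (jterm ?A)")
    case True
    then show ?thesis using kM by (auto simp: fmu_def intro: t_refl)
  next
    case False
    then show ?thesis using kM by (auto simp: fmu_def intro: eq_t_eq_j.e2)
  qed
next
  case (e3 k L x M)
  then show ?case by (auto intro: eq_t_eq_j.e3)
qed (auto intro: eq_t_eq_j.intros)

lemma nf_vstep: "vstep_t M N \<Longrightarrow> eq_t (nf_t M) (nf_t N)" "vstep_j J K \<Longrightarrow> eq_j (nf_j J) (nf_j K)"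
proof (induct rule: vstep_t_vstep_j.inducts)
  case (v_root k M)
  then show ?case using fcv_nf(1)[of M] by (auto simp: fmu_def intro: t_refl)
next
  case (v_mu J J' k)
  then show ?case by (simp add: fmu_cong)
qed (auto intro: eq_t_eq_j.intros)

definition st_t where "st_t M N \<longleftrightarrow> eq_t M N \<or> vred_t M N"
definition st_j where "st_j J K \<longleftrightarrow> eq_j J K \<or> vred_j J K"

lemma vreds_t_st: "vreds_t = st_t\<^sup>*\<^sup>*"
  unfolding vreds_t_def st_t_def by simp
lemma vreds_j_st: "vreds_j = st_j\<^sup>*\<^sup>*"
  unfolding vreds_j_def st_j_def by simp

lemma lift_rtc: "(\<And>a b. R a b \<Longrightarrow> S (C a) (C b)) \<Longrightarrow> R\<^sup>*\<^sup>* a b \<Longrightarrow> S\<^sup>*\<^sup>* (C a) (C b)"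
proof -
  assume h: "\<And>a b. R a b \<Longrightarrow> S (C a) (C b)" and r: "R\<^sup>*\<^sup>* a b"
  from r show ?thesis
    by (induct rule: rtranclp_induct) (auto intro: rtranclp.rtrancl_into_rtrancl h)
qed

lemma st_lam: "st_t a b \<Longrightarrow> st_t (Lam x a) (Lam x b)"
  unfolding st_t_def vred_t_def by (blast intro: c_lam v_lam)
lemma st_app1: "st_t a b \<Longrightarrow> st_t (App a N) (App b N)"
  unfolding st_t_def vred_t_def by (blast intro: c_app t_refl v_app1)
lemma st_app2: "st_t a b \<Longrightarrow> st_t (App N a) (App N b)"
  unfolding st_t_def vred_t_def by (blast intro: c_app t_refl v_app2)
lemma st_tw1: "st_t a b \<Longrightarrow> st_t (TWhere a x N) (TWhere b x N)"
  unfolding st_t_def vred_t_def by (blast intro: c_twhere t_refl v_twhere1)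
lemma st_tw2: "st_t a b \<Longrightarrow> st_t (TWhere N x a) (TWhere N x b)"
  unfolding st_t_def vred_t_def by (blast intro: c_twhere t_refl v_twhere2)
lemma st_mu: "st_j a b \<Longrightarrow> st_t (Mu k a) (Mu k b)"
  unfolding st_t_def st_j_def vred_t_def vred_j_def by (blast intro: c_mu v_mu)
lemma st_jmp: "st_t a b \<Longrightarrow> st_j (Jmp k a) (Jmp k b)"
  unfolding st_t_def st_j_def vred_t_def vred_j_def by (blast intro: c_jmp v_jmp)
lemma st_jw1: "st_j a b \<Longrightarrow> st_j (JWhere a x N) (JWhere b x N)"
  unfolding st_j_def vred_j_def by (blast intro: c_jwhere t_refl v_jwhere1)
lemma st_jw2: "st_t a b \<Longrightarrow> st_j (JWhere N x a) (JWhere N x b)"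
  unfolding st_t_def st_j_def vred_t_def vred_j_def by (blast intro: c_jwhere j_refl v_jwhere2)

lemma nf_reds: "st_t\<^sup>*\<^sup>* M (nf_t M)" "st_j\<^sup>*\<^sup>* J (nf_j J)"
proof (induct M and J)
  case (Lam x M)
  then show ?case using lift_rtc[of st_t st_t "Lam x", OF st_lam] by simp
next
  case (App M N)
  have "st_t\<^sup>*\<^sup>* (App M N) (App (nf_t M) N)"
    using App lift_rtc[of st_t st_t "\<lambda>a. App a N", OF st_app1] by simp
  moreover have "st_t\<^sup>*\<^sup>* (App (nf_t M) N) (App (nf_t M) (nf_t N))"
    using App lift_rtc[of st_t st_t "\<lambda>a. App (nf_t M) a", OF st_app2] by simp
  ultimately show ?case by simp
next
  case (TWhere L x M)
  have "st_t\<^sup>*\<^sup>* (TWhere L x M) (TWhere (nf_t L) x M)"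
    using TWhere lift_rtc[of st_t st_t "\<lambda>a. TWhere a x M", OF st_tw1] by simp
  moreover have "st_t\<^sup>*\<^sup>* (TWhere (nf_t L) x M) (TWhere (nf_t L) x (nf_t M))"
    using TWhere lift_rtc[of st_t st_t "\<lambda>a. TWhere (nf_t L) x a", OF st_tw2] by simp
  ultimately show ?case by simp
next
  case (Mu k J)
  let ?A = "nf_j J"
  have 1: "st_t\<^sup>*\<^sup>* (Mu k J) (Mu k ?A)"
    using Mu lift_rtc[of st_j st_t "Mu k", OF st_mu] by simp
  show ?case
  proof (cases "jhead ?A = k \<and> k \<notin> fcv_t (jterm ?A)")
    case True
    have "eq_t (Mu k ?A) (Mu k (Jmp k (jterm ?A)))"
      using True jmp_flat_aux(2)[of ?A] by (auto intro: c_mu)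
    moreover have "vstep_t (Mu k (Jmp k (jterm ?A))) (jterm ?A)" using True by (auto intro: v_root)
    ultimately have "st_t (Mu k ?A) (jterm ?A)" unfolding st_t_def vred_t_def by (blast intro: t_refl)
    then show ?thesis using 1 True by (simp add: fmu_def)
  next
    case False
    then show ?thesis using 1 by (auto simp: fmu_def)
  qed
next
  case (Jmp k M)
  then show ?case using lift_rtc[of st_t st_j "Jmp k", OF st_jmp] by simp
next
  case (JWhere J x M)
  have "st_j\<^sup>*\<^sup>* (JWhere J x M) (JWhere (nf_j J) x M)"
    using JWhere lift_rtc[of st_j st_j "\<lambda>a. JWhere a x M", OF st_jw1] by simp
  moreover have "st_j\<^sup>*\<^sup>* (JWhere (nf_j J) x M) (JWhere (nf_j J) x (nf_t M))"
    using JWhere lift_rtc[of st_t st_j "\<lambda>a. JWhere (nf_j J) x a", OF st_jw2] by simp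
  ultimately show ?case by simp
qed simp

lemma st_nf_t: "st_t M N \<Longrightarrow> eq_t (nf_t M) (nf_t N)"
  unfolding st_t_def vred_t_def by (blast intro: t_trans nf_eq nf_vstep)
lemma st_nf_j: "st_j M N \<Longrightarrow> eq_j (nf_j M) (nf_j N)"
  unfolding st_j_def vred_j_def by (blast intro: j_trans nf_eq nf_vstep)

lemma rtc_nf_t: "st_t\<^sup>*\<^sup>* M N \<Longrightarrow> eq_t (nf_t M) (nf_t N)"
  by (induct rule: rtranclp_induct) (auto intro: t_refl t_trans st_nf_t)
lemma rtc_nf_j: "st_j\<^sup>*\<^sup>* M N \<Longrightarrow> eq_j (nf_j M) (nf_j N)"
  by (induct rule: rtranclp_induct) (auto intro: j_refl j_trans st_nf_j)

lemma conf_t: "confluent vreds_t"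
  unfolding confluent_def vreds_t_st
proof (intro allI impI)
  fix M N1 N2 assume a: "st_t\<^sup>*\<^sup>* M N1 \<and> st_t\<^sup>*\<^sup>* M N2"
  have "eq_t (nf_t N2) (nf_t N1)"
    using a rtc_nf_t by (blast intro: t_trans t_sym)
  then have "st_t (nf_t N2) (nf_t N1)" by (simp add: st_t_def)
  then have "st_t\<^sup>*\<^sup>* N2 (nf_t N1)" using nf_reds(1)[of N2] by simp
  then show "\<exists>P. st_t\<^sup>*\<^sup>* N1 P \<and> st_t\<^sup>*\<^sup>* N2 P" using nf_reds(1)[of N1] by blast
qed

lemma conf_j: "confluent vreds_j"
  unfolding confluent_def vreds_j_st
proof (intro allI impI)
  fix M N1 N2 assume a: "st_j\<^sup>*\<^sup>* M N1 \<and> st_j\<^sup>*\<^sup>* M N2"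
  have "eq_j (nf_j N2) (nf_j N1)"
    using a rtc_nf_j by (blast intro: j_trans j_sym)
  then have "st_j (nf_j N2) (nf_j N1)" by (simp add: st_j_def)
  then have "st_j\<^sup>*\<^sup>* N2 (nf_j N1)" using nf_reds(2)[of N2] by simp
  then show "\<exists>P. st_j\<^sup>*\<^sup>* N1 P \<and> st_j\<^sup>*\<^sup>* N2 P" using nf_reds(2)[of N1] by blast
qed

lemma sn_t: "SN vred_t"
  unfolding SN_def
proof (rule wfp_if_convertible_to_nat[where f = cnt_t])
  fix x y assume "vred_t y x"
  then obtain M' N' where "eq_t y M'" "vstep_t M' N'" "eq_t N' x" unfolding vred_t_def by blast
  then show "cnt_t x < cnt_t y" using cnt_eq(1) cnt_vstep(1) by metis
qed

lemma sn_j: "SN vred_j"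
  unfolding SN_def
proof (rule wfp_if_convertible_to_nat[where f = cnt_j])
  fix x y assume "vred_j y x"
  then obtain M' N' where "eq_j y M'" "vstep_j M' N'" "eq_j N' x" unfolding vred_j_def by blast
  then show "cnt_j x < cnt_j y" using cnt_eq(2) cnt_vstep(2) by metis
qed

theorem lemma1p21:
  shows "SN vred_t \<and> SN vred_j \<and> confluent vreds_t \<and> confluent vreds_j"
  using sn_t sn_j conf_t conf_j by blast

end
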